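(* Let $F$ be a $2$-edge-coloured graph on $n \geq 2$ vertices such that $d^R(v) \geq \log_2 n$ and $d^B(v) \geq \log_2 n$ for every vertex $v \in V(F)$. Then $F$ contains an alternating cycle.
   Context: A $2$-edge-coloured graph is a finite simple graph each of whose edges is coloured red or blue. For a vertex $v$, $d^R(v)$ (resp. $d^B(v)$) is the number of red (resp. blue) edges incident to $v$. An alternating cycle is a cycle (in the graph-theoretic sense, with distinct vertices) whose consecutive edges have alternating colours. *)

theory Defs
  imports Main "HOL-Library.Log_Nat" Complex_Main
begin

definition two_coloured_graph :: "'a set \<Rightarrow> ('a \<Rightarrow> 'a \<Rightarrow> bool) \<Rightarrow> ('a \<Rightarrow> 'a \<Rightarrow> bool) \<Rightarrow> bool" where
  "two_coloured_graph V Rd Bl \<longleftrightarrow> finite V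
     \<and> (\<forall>u v. Rd u v \<longrightarrow> u \<in> V \<and> v \<in> V \<and> u \<noteq> v \<and> Rd v u)
     \<and> (\<forall>u v. Bl u v \<longrightarrow> u \<in> V \<and> v \<in> V \<and> u \<noteq> v \<and> Bl v u)
     \<and> (\<forall>u v. \<not> (Rd u v \<and> Bl u v))"

definition red_deg :: "'a set \<Rightarrow> ('a \<Rightarrow> 'a \<Rightarrow> bool) \<Rightarrow> 'a \<Rightarrow> nat" where
  "red_deg V Rd v = card {u \<in> V. Rd v u}"

definition blue_deg :: "'a set \<Rightarrow> ('a \<Rightarrow> 'a \<Rightarrow> bool) \<Rightarrow> 'a \<Rightarrow> nat" where
  "blue_deg V Bl v = card {u \<in> V. Bl v u}"

definition alternating_cycle :: "('a \<Rightarrow> 'a \<Rightarrow> bool) \<Rightarrow> ('a \<Rightarrow> 'a \<Rightarrow> bool) \<Rightarrow> 'a list \<Rightarrow> bool" where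
  "alternating_cycle Rd Bl c \<longleftrightarrow> length c \<ge> 3 \<and> distinct c
     \<and> (\<forall>i < length c. Rd (c!i) (c!((i+1) mod length c)) \<or> Bl (c!i) (c!((i+1) mod length c)))
     \<and> (\<forall>i < length c.
          Rd (c!i) (c!((i+1) mod length c)) \<longleftrightarrow>
          Bl (c!((i+1) mod length c)) (c!((i+2) mod length c)))"

end

theory Submission
  imports Defs
begin


lemma succ_take: "successively P xs \<Longrightarrow> successively P (take n xs)"
  by (auto simp add: successively_conv_nth)

lemma succ_drop: "successively P xs \<Longrightarrow> successively P (drop n xs)"
  by (auto simp add: successively_conv_nth)

lemma succ_snoc: "successively P (xs @ [y]) \<Longrightarrow> xs \<noteq> [] \<Longrightarrow> successively P xs \<and> P (last xs) y"
  by (simp add: successively_append_iff)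

lemma not_succ: "\<not> successively P xs \<Longrightarrow> \<exists>as a b bs. xs = as @ a # b # bs \<and> \<not> P a b"
proof (induction xs)
  case Nil then show ?case by simp
next
  case (Cons x xs)
  show ?case
  proof (cases xs)
    case Nil then show ?thesis using Cons by simp
  next
    case (Cons y ys)
    show ?thesis
    proof (cases "P x y")
      case True
      then have "\<not> successively P xs" using Cons.prems Cons by simp
      then obtain as a b bs where "xs = as @ a # b # bs" "\<not> P a b" using Cons.IH by blast
      then show ?thesis by (intro exI[of _ "x # as"]) auto
    next
      case False then show ?thesis using Cons by (intro exI[of _ "[]"]) auto
    qed
  qed
qed

lemma cyc_nth:
  assumes "successively P xs" "xs \<noteq> []" "P (last xs) (hd xs)" "i < length xs"
  shows "P (xs!i) (xs!(Suc i mod length xs))"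
proof (cases "Suc i < length xs")
  case True then show ?thesis using assms successively_nth by fastforce
next
  case False
  then have "Suc i = length xs" using assms by simp
  then have "i = length xs - 1" by simp
  then show ?thesis using assms \<open>Suc i = length xs\<close> by (simp add: last_conv_nth hd_conv_nth)
qed

lemma last_take_Suc: "i < length xs \<Longrightarrow> last (take (Suc i) xs) = xs!i"
  by (simp add: take_Suc_conv_app_nth)

lemma rotate_succ:
  assumes "successively P (as @ a # b # bs)" "P (last (b # bs)) (hd (as @ [a]))"
  shows "successively P (b # bs @ as @ [a]) \<and> P a b"
proof -
  have s: "successively P (as @ [a])" "successively P (b # bs)" "P a b"
    using assms(1) by (simp_all add: successively_append_iff)
  have "successively P ((b # bs) @ (as @ [a]))"
    using s assms(2) by (subst successively_append_iff) simp
  then show ?thesis using s by simp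
qed

lemma succ_good:
  assumes "successively P xs" "distinct xs"
  shows "successively (\<lambda>u v. P u v \<and> u \<noteq> last xs \<and> v \<noteq> hd xs) xs"
  unfolding successively_conv_nth
proof (intro allI impI conjI)
  fix i assume i: "Suc i < length xs"
  show "P (xs ! i) (xs ! Suc i)" using assms(1) i successively_nth by blast
  have ne: "xs \<noteq> []" using i by auto
  show "xs ! i \<noteq> last xs" using i assms(2) ne
    by (simp add: last_conv_nth nth_eq_iff_index_eq)
  show "xs ! Suc i \<noteq> hd xs" using i assms(2) ne
    by (simp add: hd_conv_nth nth_eq_iff_index_eq)
qed

definition reg :: "('b \<Rightarrow> 'b) \<Rightarrow> 'b list \<Rightarrow> bool" where
  "reg m xs \<longleftrightarrow> distinct xs \<and> (\<forall>x\<in>set xs. m x \<notin> set xs)"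

definition arcH :: "('b \<Rightarrow> 'b \<Rightarrow> bool) \<Rightarrow> ('b \<Rightarrow> 'b) \<Rightarrow> 'b \<Rightarrow> 'b \<Rightarrow> bool" where
  "arcH E m x y \<longleftrightarrow> E (m x) y \<and> y \<noteq> x"

definition rcyc :: "'b set \<Rightarrow> ('b \<Rightarrow> 'b \<Rightarrow> bool) \<Rightarrow> ('b \<Rightarrow> 'b) \<Rightarrow> 'b list \<Rightarrow> bool" where
  "rcyc W E m xs \<longleftrightarrow> 2 \<le> length xs \<and> set xs \<subseteq> W \<and> reg m xs \<and>
     successively (arcH E m) xs \<and> arcH E m (last xs) (hd xs)"

definition wfH :: "'b set \<Rightarrow> ('b \<Rightarrow> 'b \<Rightarrow> bool) \<Rightarrow> ('b \<Rightarrow> 'b) \<Rightarrow> bool" where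
  "wfH W E m \<longleftrightarrow> finite W \<and> (\<forall>x y. E x y \<longrightarrow> x \<in> W \<and> y \<in> W \<and> x \<noteq> y \<and> E y x)
     \<and> (\<forall>x\<in>W. m x \<in> W \<and> m x \<noteq> x \<and> m (m x) = x \<and> E x (m x))"

lemma reg_drop: "reg m xs \<Longrightarrow> reg m (drop i xs)"
  unfolding reg_def using set_drop_subset by fastforce

lemma reg_take: "reg m xs \<Longrightarrow> reg m (take i xs)"
  unfolding reg_def using set_take_subset by fastforce

lemma reg_map_rev:
  assumes "wfH W E m" "set xs \<subseteq> W" "reg m xs"
  shows "reg m (rev (map m xs))"
proof -
  have inv: "\<And>x. x \<in> W \<Longrightarrow> m (m x) = x" using assms(1) by (auto simp: wfH_def)
  have inj: "inj_on m (set xs)" using assms(2) inv by (metis inj_on_inverseI subsetD)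
  show ?thesis using assms(3) inj unfolding reg_def
    by (auto simp: distinct_map) (metis assms(2) inv subsetD)
qed

lemma skew:
  assumes "wfH W E m" "set xs \<subseteq> W" "successively (arcH E m) xs"
  shows "successively (arcH E m) (rev (map m xs))"
proof -
  have "successively (\<lambda>x y. arcH E m (m y) (m x)) xs"
  proof (rule successively_mono[OF assms(3)])
    fix x y assume "x \<in> set xs" "y \<in> set xs" "arcH E m x y"
    then show "arcH E m (m y) (m x)" using assms(1,2) unfolding wfH_def arcH_def
      by (metis subsetD)
  qed
  then show ?thesis by (simp add: successively_rev successively_map)
qed



lemma wfH_E: "wfH W E m \<Longrightarrow> E x y \<Longrightarrow> x \<in> W \<and> y \<in> W \<and> x \<noteq> y \<and> E y x"
  unfolding wfH_def by blast

lemma wfH_m: "wfH W E m \<Longrightarrow> x \<in> W \<Longrightarrow> m x \<in> W \<and> m x \<noteq> x \<and> m (m x) = x \<and> E x (m x)"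
  unfolding wfH_def by blast

lemma mpath_exists:
  assumes wf: "wfH W E m" and ne: "W \<noteq> {}" and nc: "\<not>(\<exists>xs. rcyc W E m xs)"
    and out: "\<forall>x\<in>W. \<exists>y. arcH E m x y"
  shows "\<exists>qs. qs \<noteq> [] \<and> set qs \<subseteq> W \<and> last qs = m (hd qs) \<and> successively (arcH E m) qs"
proof -
  define P where "P ps \<longleftrightarrow> ps \<noteq> [] \<and> set ps \<subseteq> W \<and> reg m ps \<and> successively (arcH E m) ps" for ps
  obtain w where w: "w \<in> W" using ne by auto
  have "P [w]" using wfH_m[OF wf w] by (simp add: P_def reg_def w)
  moreover have "\<forall>ps. P ps \<longrightarrow> length ps < card W + 1"
  proof (intro allI impI)
    fix ps assume "P ps"
    then have "distinct ps" "set ps \<subseteq> W" by (auto simp: P_def reg_def)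
    then have "length ps \<le> card W" using wf
      by (metis card_mono distinct_card wfH_def)
    then show "length ps < card W + 1" by simp
  qed
  ultimately obtain ps where Pps: "P ps" and mx: "\<forall>qs. P qs \<longrightarrow> length qs \<le> length ps"
    using ex_has_greatest_nat[of P "[w]" length "card W + 1"] by blast
  have ne: "ps \<noteq> []" and sW: "set ps \<subseteq> W" and rg: "reg m ps" and sc: "successively (arcH E m) ps"
    using Pps by (auto simp: P_def)
  define x where "x = last ps"
  have xW: "x \<in> W" using ne sW x_def by auto
  obtain y where a: "arcH E m x y" using out xW by blast
  have yW: "y \<in> W" using a wf unfolding arcH_def wfH_def by blast
  show ?thesis
  proof (cases "y \<in> set ps")
    case True
    then obtain i where i: "i < length ps" "ps ! i = y" by (auto simp: in_set_conv_nth)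
    define cs where "cs = drop i ps"
    have "length cs \<ge> 2"
    proof (rule ccontr)
      assume "\<not> length cs \<ge> 2"
      then have "i = length ps - 1" using i cs_def by auto
      then have "y = x" using i ne x_def by (simp add: last_conv_nth)
      then show False using a by (simp add: arcH_def)
    qed
    moreover have "set cs \<subseteq> W" using sW cs_def set_drop_subset by fastforce
    moreover have "reg m cs" using rg cs_def reg_drop by blast
    moreover have "successively (arcH E m) cs" using sc cs_def succ_drop by blast
    moreover have "last cs = x" using cs_def i x_def by simp
    moreover have "hd cs = y" using cs_def i by (simp add: hd_drop_conv_nth)
    ultimately have "rcyc W E m cs" using a by (simp add: rcyc_def)
    then show ?thesis using nc by blast
  next
    case False
    note yn = False
    show ?thesis
    proof (cases "y \<in> m ` set ps")
      case True
      then obtain i where i: "i < length ps" "y = m (ps ! i)" by (auto simp: in_set_conv_nth)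
      define qs where "qs = drop i ps @ [y]"
      have "drop i ps \<noteq> []" using i by simp
      then have "successively (arcH E m) qs" using sc a i x_def
        by (simp add: qs_def successively_append_iff succ_drop)
      moreover have "set qs \<subseteq> W" using sW yW qs_def set_drop_subset by fastforce
      moreover have "last qs = m (hd qs)" using i by (simp add: qs_def hd_drop_conv_nth)
      ultimately show ?thesis by (intro exI[of _ qs]) (simp add: qs_def)
    next
      case False
      have myn: "m y \<notin> set ps"
      proof
        assume "m y \<in> set ps"
        then have "m (m y) \<in> m ` set ps" by blast
        then show False using False wfH_m[OF wf yW] by simp
      qed
      have "P (ps @ [y])"
      proof -
        have "reg m (ps @ [y])" using rg yn False myn wfH_m[OF wf yW] unfolding reg_def
          by auto
        moreover have "successively (arcH E m) (ps @ [y])" using sc a ne x_def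
          by (simp add: successively_append_iff)
        ultimately show ?thesis using sW yW by (simp add: P_def)
      qed
      then show ?thesis using mx by fastforce
    qed
  qed
qed

lemma blossom_exists:
  assumes wf: "wfH W E m" and ne: "W \<noteq> {}" and nc: "\<not>(\<exists>xs. rcyc W E m xs)"
    and out: "\<forall>x\<in>W. \<exists>y. arcH E m x y"
  shows "\<exists>p0 S. p0 \<in> W \<and> S \<subseteq> W \<and> m p0 \<notin> S \<and> p0 \<notin> S \<and> S \<noteq> {} \<and> (\<forall>s\<in>S. m s \<in> S)
    \<and> (\<forall>s\<in>S. \<exists>seg. seg \<noteq> [] \<and> set seg \<subseteq> S \<and> reg m seg \<and> hd seg = s
          \<and> successively (arcH E m) (seg @ [m p0]))"
proof -
  define Q where "Q qs \<longleftrightarrow> qs \<noteq> [] \<and> set qs \<subseteq> W \<and> last qs = m (hd qs) \<and> successively (arcH E m) qs" for qs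
  obtain q1 where "Q q1" using mpath_exists[OF assms] Q_def by blast
  then obtain qs where Qq: "Q qs" and mn: "\<forall>q. Q q \<longrightarrow> length qs \<le> length q"
    using ex_has_least_nat[of Q q1 length] by blast
  have qne: "qs \<noteq> []" and qW: "set qs \<subseteq> W" and ql: "last qs = m (hd qs)"
    and qsc: "successively (arcH E m) qs" using Qq by (auto simp: Q_def)
  define ps where "ps = butlast qs"
  define p0 where "p0 = hd qs"
  have p0W: "p0 \<in> W" using qne qW p0_def by auto
  have qeq: "qs = ps @ [m p0]" using qne ql ps_def p0_def by (metis append_butlast_last_id)
  have lq: "length qs = Suc (length ps)" using qeq by simp
  have nthq: "\<And>i. i < length ps \<Longrightarrow> qs ! i = ps ! i" using qeq by (simp add: nth_append)
  have inv: "\<And>x. x \<in> W \<Longrightarrow> m (m x) = x" using wf by (simp add: wfH_m)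
  have l3: "length qs \<ge> 3"
  proof (rule ccontr)
    assume "\<not> length qs \<ge> 3"
    then have "length qs = 1 \<or> length qs = 2" using qne
      by (cases "length qs") auto
    then show False
    proof
      assume "length qs = 1"
      then have "last qs = hd qs" by (cases qs) auto
      then show False using ql wfH_m[OF wf p0W] p0_def by simp
    next
      assume "length qs = 2"
      then obtain a b where "qs = [a, b]" by (cases qs; cases "tl qs") auto
      then show False using ql qsc wf unfolding arcH_def wfH_def by auto
    qed
  qed
  have psW: "set ps \<subseteq> W" using qW qeq by auto
  (* distinctness by minimality *)
  have dps: "distinct ps"
  proof (rule ccontr)
    assume "\<not> distinct ps"
    then obtain i j where ij: "i < j" "j < length ps" "ps ! i = ps ! j"
      by (metis distinct_conv_nth linorder_neqE_nat)
    define q' where "q' = take (Suc i) qs @ drop (Suc j) qs"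
    have "Q q'"
    proof -
      have "drop (Suc j) qs \<noteq> []" using ij lq by simp
      moreover have "hd q' = hd qs" using q'_def qne by (cases qs) auto
      moreover have "last q' = last qs" using q'_def \<open>drop (Suc j) qs \<noteq> []\<close> by simp
      moreover have "set q' \<subseteq> W" using qW q'_def set_take_subset set_drop_subset by fastforce
      moreover have "successively (arcH E m) q'"
      proof -
        have "last (take (Suc i) qs) = qs ! j" using ij lq nthq by (simp add: last_take_Suc)
        moreover have "hd (drop (Suc j) qs) = qs ! Suc j" using ij lq by (simp add: hd_drop_conv_nth)
        moreover have "arcH E m (qs ! j) (qs ! Suc j)" using qsc ij lq successively_nth by fastforce
        ultimately show ?thesis using qsc q'_def
          by (simp add: successively_append_iff succ_take succ_drop)
      qed
      ultimately show ?thesis using ql by (simp add: Q_def q'_def)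
    qed
    moreover have "length q' < length qs" using q'_def ij lq by simp
    ultimately show False using mn by fastforce
  qed
  have pps: "\<forall>x\<in>set ps. m x \<notin> set ps"
  proof (rule ccontr)
    assume "\<not> (\<forall>x\<in>set ps. m x \<notin> set ps)"
    then obtain i j where ij: "i < length ps" "j < length ps" "ps ! j = m (ps ! i)"
      by (auto simp: in_set_conv_nth)
    have piW: "ps ! i \<in> W" using ij psW by auto
    have "i \<noteq> j" using ij wfH_m[OF wf piW] by auto
    have key: "\<And>a b. a < b \<Longrightarrow> b < length ps \<Longrightarrow> ps ! b = m (ps ! a) \<Longrightarrow> False"
    proof -
      fix a b assume ab: "a < b" "b < length ps" "ps ! b = m (ps ! a)"
      define q' where "q' = drop a (take (Suc b) qs)"
      have "Q q'"
      proof -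
        have "q' \<noteq> []" using ab lq q'_def by simp
        moreover have "hd q' = ps ! a" using ab lq nthq q'_def by (simp add: hd_drop_conv_nth)
        moreover have "last q' = ps ! b" using ab lq nthq q'_def
          by (simp add: last_take_Suc)
        moreover have "set q' \<subseteq> W" using qW q'_def set_take_subset set_drop_subset
          by (metis order_trans)
        moreover have "successively (arcH E m) q'" using qsc q'_def succ_take succ_drop by blast
        ultimately show ?thesis using ab by (simp add: Q_def)
      qed
      moreover have "length q' < length qs" using q'_def ab lq by simp
      ultimately show False using mn by fastforce
    qed
    show False
    proof (cases "i < j")
      case True then show ?thesis using key ij by blast
    next
      case False
      then have "j < i" using \<open>i \<noteq> j\<close> by simp
      moreover have "ps ! i = m (ps ! j)" using ij inv piW by simp
      ultimately show ?thesis using key ij by blast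
    qed
  qed
  have rps: "reg m ps" using dps pps by (simp add: reg_def)
  have lps: "length ps \<ge> 2" using l3 lq by simp
  have psne: "ps \<noteq> []" using lps by auto
  have "hd (ps @ [m p0]) = hd ps" using psne by simp
  then have hps: "hd ps = p0" using qeq p0_def by metis
  have pseq: "ps = p0 # tl ps" using psne hps by (metis list.collapse)
  define T where "T = set (tl ps)"
  define S where "S = T \<union> m ` T"
  have TW: "T \<subseteq> W" using psW pseq T_def by (metis set_subset_Cons subset_trans)
  have SW: "S \<subseteq> W" using TW wf S_def by (auto simp: wfH_m)
  have Sm: "\<forall>s\<in>S. m s \<in> S" using TW inv S_def by auto
  have tlne: "tl ps \<noteq> []" using lps by (cases ps) auto
  then have Sne: "S \<noteq> {}" using S_def T_def by (cases "tl ps") auto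
  have p0T: "p0 \<notin> T" using dps pseq T_def by (metis distinct.simps(2))
  have mp0ps: "m p0 \<notin> set ps" using pps pseq by (metis list.set_intros(1))
  have c0S: "m p0 \<notin> S"
  proof
    assume "m p0 \<in> S"
    then show False
    proof (unfold S_def, elim UnE)
      assume "m p0 \<in> T" then show False using mp0ps pseq T_def by (metis list.set_intros(2))
    next
      assume "m p0 \<in> m ` T"
      then obtain t where "t \<in> T" "m p0 = m t" by auto
      then have "t = p0" using inv p0W TW by (metis subsetD)
      then show False using p0T \<open>t \<in> T\<close> by simp
    qed
  qed
  have p0S: "p0 \<notin> S"
  proof
    assume "p0 \<in> S"
    then show False
    proof (unfold S_def, elim UnE)
      assume "p0 \<in> T" then show False using p0T by simp
    next
      assume "p0 \<in> m ` T"
      then obtain t where "t \<in> T" "p0 = m t" by auto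
      then have "m p0 = t" using inv TW by auto
      then show False using mp0ps \<open>t \<in> T\<close> pseq T_def by (metis list.set_intros(2))
    qed
  qed
  have rtl: "reg m (tl ps)" using rps reg_drop[of m ps 1] by (simp add: drop_Suc)
  have segs: "\<forall>s\<in>S. \<exists>seg. seg \<noteq> [] \<and> set seg \<subseteq> S \<and> reg m seg \<and> hd seg = s
          \<and> successively (arcH E m) (seg @ [m p0])"
  proof
    fix s assume "s \<in> S"
    then have "s \<in> T \<or> s \<in> m ` T" using S_def by blast
    then show "\<exists>seg. seg \<noteq> [] \<and> set seg \<subseteq> S \<and> reg m seg \<and> hd seg = s
          \<and> successively (arcH E m) (seg @ [m p0])"
    proof (elim disjE)
      assume "s \<in> T"
      then obtain k where k: "k < length (tl ps)" "tl ps ! k = s" using T_def by (auto simp: in_set_conv_nth)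
      define seg where "seg = drop k (tl ps)"
      have "seg @ [m p0] = drop (Suc k) qs" using qeq k seg_def lps
        by (simp add: drop_Suc tl_append)
      then have "successively (arcH E m) (seg @ [m p0])" using qsc succ_drop by metis
      moreover have "seg \<noteq> []" using k seg_def by simp
      moreover have "set seg \<subseteq> S" using seg_def T_def S_def set_drop_subset by fastforce
      moreover have "reg m seg" using rtl seg_def reg_drop by blast
      moreover have "hd seg = s" using k seg_def by (simp add: hd_drop_conv_nth)
      ultimately show ?thesis by blast
    next
      assume "s \<in> m ` T"
      then obtain t where "t \<in> T" "s = m t" by auto
      then obtain k where k: "k < length (tl ps)" "tl ps ! k = t" using T_def by (auto simp: in_set_conv_nth)
      define L where "L = take (Suc k) (tl ps)"
      define seg where "seg = rev (map m L)"
      have "qs = p0 # tl ps @ [m p0]" using qeq pseq by (metis append_Cons)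
      then have "take (Suc (Suc k)) qs = take (Suc (Suc k)) (p0 # tl ps @ [m p0])" by simp
      also have "\<dots> = p0 # L" using k L_def by simp
      finally have "take (Suc (Suc k)) qs = p0 # L" .
      then have eq: "rev (map m (take (Suc (Suc k)) qs)) = seg @ [m p0]" using seg_def by simp
      have "set (take (Suc (Suc k)) qs) \<subseteq> W" using qW set_take_subset by fastforce
      then have "successively (arcH E m) (seg @ [m p0])"
        using skew[OF wf _ succ_take[OF qsc]] eq by metis
      moreover have "seg \<noteq> []" using k seg_def L_def tlne by simp
      moreover have "set seg \<subseteq> S" using seg_def L_def T_def S_def set_take_subset by fastforce
      moreover have "reg m seg" using reg_map_rev[OF wf _ reg_take[OF rtl]] seg_def L_def TW T_def
        set_take_subset by (metis order_trans)
      moreover have "hd seg = s" using k seg_def L_def \<open>s = m t\<close> tlne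
        by (simp add: hd_rev last_take_Suc last_map)
      ultimately show ?thesis by blast
    qed
  qed
  show ?thesis
    apply (rule exI[of _ p0], rule exI[of _ S])
    using p0W SW c0S p0S Sne Sm segs by (simp add: S_def)
qed



definition contrE :: "('b \<Rightarrow> 'b \<Rightarrow> bool) \<Rightarrow> 'b set \<Rightarrow> 'b \<Rightarrow> 'b \<Rightarrow> 'b \<Rightarrow> bool" where
  "contrE E S c x y \<longleftrightarrow> x \<notin> S \<and> y \<notin> S \<and>
     (E x y \<or> (x = c \<and> y \<noteq> c \<and> (\<exists>s\<in>S. E s y)) \<or> (y = c \<and> x \<noteq> c \<and> (\<exists>s\<in>S. E s x)))"

lemma reg_app:
  assumes wf: "wfH W E m" and "reg m ys" "set ys \<subseteq> W - S" "reg m seg" "set seg \<subseteq> S"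
    and Sm: "\<forall>s\<in>S. m s \<in> S" and SW: "S \<subseteq> W"
  shows "reg m (ys @ seg)"
proof -
  have inv: "\<And>x. x \<in> W \<Longrightarrow> m (m x) = x" using wf by (simp add: wfH_m)
  have mo: "\<And>x. x \<in> set ys \<Longrightarrow> m x \<notin> S"
  proof
    fix x assume x: "x \<in> set ys" "m x \<in> S"
    then have "m (m x) \<in> S" using Sm by blast
    then show False using x assms(3) inv by auto
  qed
  show ?thesis using assms mo unfolding reg_def by auto
qed

lemma finish:
  fixes p0 :: 'b
  assumes wf: "wfH W E m"
    and B: "p0 \<in> W" "S \<subseteq> W" "m p0 \<notin> S" "p0 \<notin> S" "\<forall>s\<in>S. m s \<in> S"
    and segs: "\<forall>s\<in>S. \<exists>seg. seg \<noteq> [] \<and> set seg \<subseteq> S \<and> reg m seg \<and> hd seg = s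
          \<and> successively (arcH E m) (seg @ [m p0])"
    and cyc: "rcyc (W - S) (contrE E S (m p0)) m ys"
    and bad: "\<not> arcH E m (last ys) (hd ys)"
  shows "\<exists>zs. rcyc W E m zs"
proof -
  define c0 where "c0 = m p0"
  define a where "a = last ys"
  define b where "b = hd ys"
  have inv: "\<And>x. x \<in> W \<Longrightarrow> m (m x) = x" using wf by (simp add: wfH_m)
  have mc0: "m c0 = p0" using c0_def inv B by simp
  have c0W: "c0 \<in> W" using c0_def B wf by (simp add: wfH_m)
  have l2: "2 \<le> length ys" and yW: "set ys \<subseteq> W - S" and ry: "reg m ys"
    and sy: "successively (arcH (contrE E S c0) m) ys"
    and cl: "arcH (contrE E S c0) m a b"
    using cyc by (auto simp: rcyc_def a_def b_def c0_def)
  have yne: "ys \<noteq> []" using l2 by auto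
  have aY: "a \<in> set ys" and bY: "b \<in> set ys" using yne a_def b_def by auto
  have aW: "a \<in> W" "a \<notin> S" and bW: "b \<in> W" "b \<notin> S" using aY bY yW by auto
  have nE: "\<not> E (m a) b" using bad cl by (simp add: arcH_def a_def b_def)
  have cases: "(m a = c0 \<and> (\<exists>s\<in>S. E s b)) \<or> (b = c0 \<and> (\<exists>s\<in>S. E s (m a)))"
    using cl nE by (auto simp: arcH_def contrE_def)
  have rys: "\<forall>x\<in>set ys. m x \<notin> set ys" using ry by (simp add: reg_def)
  have good: "successively (arcH E m) ys"
  proof -
    have "successively (\<lambda>u v. arcH (contrE E S c0) m u v \<and> u \<noteq> a \<and> v \<noteq> b) ys"
      using succ_good[OF sy] ry by (simp add: reg_def a_def b_def)
    then show ?thesis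
    proof (rule successively_mono)
      fix u v assume uv: "u \<in> set ys" "v \<in> set ys"
        and h: "arcH (contrE E S c0) m u v \<and> u \<noteq> a \<and> v \<noteq> b"
      have uW: "u \<in> W" using uv yW by auto
      have "m u \<noteq> c0 \<and> v \<noteq> c0"
        using cases
      proof
        assume c: "m a = c0 \<and> (\<exists>s\<in>S. E s b)"
        have "m u \<noteq> c0"
        proof
          assume "m u = c0"
          then have "m (m u) = m (m a)" using c by simp
          then show False using h inv uW aW by simp
        qed
        moreover have "v \<noteq> c0" using c rys aY uv by auto
        ultimately show ?thesis by simp
      next
        assume c: "b = c0 \<and> (\<exists>s\<in>S. E s (m a))"
        then show ?thesis using h rys bY uv by auto
      qed
      then show "arcH E m u v" using h by (auto simp: arcH_def contrE_def)
    qed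
  qed
  from cases show ?thesis
  proof
    assume c: "m a = c0 \<and> (\<exists>s\<in>S. E s b)"
    then obtain s where s: "s \<in> S" "E s b" by blast
    obtain seg where sg: "seg \<noteq> []" "set seg \<subseteq> S" "reg m seg" "hd seg = s"
      "successively (arcH E m) (seg @ [c0])" using segs s c0_def by blast
    define seg1 where "seg1 = rev (map m seg)"
    have "set (seg @ [c0]) \<subseteq> W" using sg B c0W by auto
    then have "successively (arcH E m) (rev (map m (seg @ [c0])))" using skew[OF wf] sg by blast
    then have s1: "successively (arcH E m) (p0 # seg1)" using mc0 seg1_def by simp
    have s1ne: "seg1 \<noteq> []" using sg seg1_def by simp
    have ap: "a = p0" using c aW inv mc0 by (metis c0_def)
    have s1S: "set seg1 \<subseteq> S" using sg B seg1_def by auto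
    have rs1: "reg m seg1" using reg_map_rev[OF wf _ sg(3)] sg B seg1_def by auto
    define zs where "zs = ys @ seg1"
    have "rcyc W E m zs"
    proof -
      have "successively (arcH E m) zs"
        using good s1 s1ne ap yne by (simp add: zs_def successively_append_iff successively_Cons a_def)
      moreover have "last zs = m s" using s1ne sg seg1_def zs_def by (simp add: last_rev hd_map)
      moreover have "hd zs = b" using yne zs_def b_def by simp
      moreover have "arcH E m (m s) b" using s inv B bW by (auto simp: arcH_def)
      moreover have "reg m zs" using reg_app[OF wf ry yW rs1 s1S] B zs_def by blast
      moreover have "2 \<le> length zs" using l2 zs_def by simp
      moreover have "set zs \<subseteq> W" using yW s1S B zs_def by auto
      ultimately show ?thesis by (simp add: rcyc_def)
    qed
    then show ?thesis by blast
  next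
    assume c: "b = c0 \<and> (\<exists>s\<in>S. E s (m a))"
    then obtain s where s: "s \<in> S" "E s (m a)" by blast
    obtain seg where sg: "seg \<noteq> []" "set seg \<subseteq> S" "reg m seg" "hd seg = s"
      "successively (arcH E m) (seg @ [c0])" using segs s c0_def by blast
    have ss: "successively (arcH E m) seg" "arcH E m (last seg) c0" using succ_snoc[OF sg(5) sg(1)] by auto
    define zs where "zs = ys @ seg"
    have "rcyc W E m zs"
    proof -
      have "arcH E m a s" using s aW wf unfolding arcH_def wfH_def by auto
      then have "successively (arcH E m) zs"
        using good ss sg yne by (simp add: zs_def successively_append_iff a_def)
      moreover have "last zs = last seg" using sg zs_def by simp
      moreover have "hd zs = c0" using yne zs_def b_def c by simp
      moreover have "reg m zs" using reg_app[OF wf ry yW sg(3) sg(2)] B zs_def by blast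
      moreover have "2 \<le> length zs" using l2 zs_def by simp
      moreover have "set zs \<subseteq> W" using yW sg B zs_def by auto
      ultimately show ?thesis using ss by (simp add: rcyc_def)
    qed
    then show ?thesis by blast
  qed
qed

lemma lift:
  fixes p0 :: 'b
  assumes wf: "wfH W E m"
    and B: "p0 \<in> W" "S \<subseteq> W" "m p0 \<notin> S" "p0 \<notin> S" "\<forall>s\<in>S. m s \<in> S"
    and segs: "\<forall>s\<in>S. \<exists>seg. seg \<noteq> [] \<and> set seg \<subseteq> S \<and> reg m seg \<and> hd seg = s
          \<and> successively (arcH E m) (seg @ [m p0])"
    and cyc: "rcyc (W - S) (contrE E S (m p0)) m xs"
  shows "\<exists>zs. rcyc W E m zs"
proof -
  let ?E' = "contrE E S (m p0)"
  show ?thesis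
  proof (cases "successively (arcH E m) xs \<and> arcH E m (last xs) (hd xs)")
    case True
    then show ?thesis using cyc by (auto simp: rcyc_def)
  next
    case False
    show ?thesis
    proof (cases "arcH E m (last xs) (hd xs)")
      case False
      then show ?thesis using finish[OF wf B segs cyc] by blast
    next
      case True
      then have "\<not> successively (arcH E m) xs" using False by blast
      then obtain as a b bs where xs: "xs = as @ a # b # bs" and nab: "\<not> arcH E m a b"
        using not_succ by blast
      define ys where "ys = b # bs @ as @ [a]"
      have "successively (arcH ?E' m) xs" "arcH ?E' m (last xs) (hd xs)"
        using cyc by (auto simp: rcyc_def)
      then have r: "successively (arcH ?E' m) ys \<and> arcH ?E' m a b"
        using rotate_succ[of "arcH ?E' m" as a b bs] xs ys_def by (cases as) auto
      have "rcyc (W - S) ?E' m ys"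
        using cyc r xs unfolding rcyc_def reg_def ys_def by auto
      moreover have "\<not> arcH E m (last ys) (hd ys)" using nab ys_def by simp
      ultimately show ?thesis using finish[OF wf B segs] by blast
    qed
  qed
qed

lemma NB:
  fixes p0 :: 'b
  assumes wf: "wfH W E m"
    and B: "p0 \<in> W" "S \<subseteq> W" "m p0 \<notin> S" "p0 \<notin> S" "\<forall>s\<in>S. m s \<in> S"
    and segs: "\<forall>s\<in>S. \<exists>seg. seg \<noteq> [] \<and> set seg \<subseteq> S \<and> reg m seg \<and> hd seg = s
          \<and> successively (arcH E m) (seg @ [m p0])"
    and nc: "\<not>(\<exists>xs. rcyc W E m xs)"
    and s: "s \<in> S"
  shows "\<not> E p0 s"
proof
  assume e: "E p0 s"
  have inv: "\<And>x. x \<in> W \<Longrightarrow> m (m x) = x" using wf by (simp add: wfH_m)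
  have c0W: "m p0 \<in> W" using B wf by (simp add: wfH_m)
  have mc0: "m (m p0) = p0" using inv B by simp
  obtain seg where sg: "seg \<noteq> []" "set seg \<subseteq> S" "reg m seg" "hd seg = s"
    "successively (arcH E m) (seg @ [m p0])" using segs s by blast
  have ss: "successively (arcH E m) seg" "arcH E m (last seg) (m p0)" using succ_snoc[OF sg(5) sg(1)] by auto
  have "rcyc W E m (m p0 # seg)"
  proof -
    have "arcH E m (m p0) s" using e mc0 s B by (auto simp: arcH_def)
    then have "successively (arcH E m) (m p0 # seg)" using ss sg by (simp add: successively_Cons)
    moreover have "reg m (m p0 # seg)"
    proof -
      have "\<forall>x\<in>set seg. m x \<in> S" using sg B by auto
      then show ?thesis using sg B mc0 wfH_m[OF wf B(1)] unfolding reg_def by auto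
    qed
    moreover have "2 \<le> length (m p0 # seg)" using sg by (cases seg) auto
    ultimately show ?thesis using ss sg B c0W by (auto simp: rcyc_def)
  qed
  then show False using nc by blast
qed

lemma kotzig:
  "wfH W E m \<Longrightarrow> W \<noteq> {} \<Longrightarrow> \<not>(\<exists>xs. rcyc W E m xs) \<Longrightarrow>
   \<exists>x X. x \<in> X \<and> m x \<notin> X \<and> X \<subseteq> W \<and> (\<forall>a\<in>X. \<forall>b. E a b \<longrightarrow> b \<in> X \<or> (a = x \<and> b = m x))"
proof (induction "card W" arbitrary: W E rule: less_induct)
  case less
  note wf = less.prems(1)
  have inv: "\<And>x. x \<in> W \<Longrightarrow> m (m x) = x" using wf by (simp add: wfH_m)
  show ?case
  proof (cases "\<exists>x\<in>W. \<forall>y. \<not> arcH E m x y")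
    case True
    then obtain x where x: "x \<in> W" "\<forall>y. \<not> arcH E m x y" by blast
    show ?thesis
      apply (rule exI[of _ "m x"], rule exI[of _ "{m x}"])
      using x wfH_m[OF wf x(1)] by (auto simp: arcH_def)
  next
    case False
    then have out: "\<forall>x\<in>W. \<exists>y. arcH E m x y" by blast
    obtain p0 S where B: "p0 \<in> W" "S \<subseteq> W" "m p0 \<notin> S" "p0 \<notin> S" "S \<noteq> {}" "\<forall>s\<in>S. m s \<in> S"
      and segs: "\<forall>s\<in>S. \<exists>seg. seg \<noteq> [] \<and> set seg \<subseteq> S \<and> reg m seg \<and> hd seg = s
          \<and> successively (arcH E m) (seg @ [m p0])"
      using blossom_exists[OF less.prems out] by blast
    note B' = B(1-4) B(6)
    have nb: "\<And>s. s \<in> S \<Longrightarrow> \<not> E p0 s" using NB[OF wf B' segs less.prems(3)] by blast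
    define c0 where "c0 = m p0"
    have c0W: "c0 \<in> W" using B wf c0_def by (simp add: wfH_m)
    have mc0: "m c0 = p0" using inv B c0_def by simp
    define W' where "W' = W - S"
    define E' where "E' = contrE E S c0"
    have fin: "finite W" using wf by (simp add: wfH_def)
    have wf': "wfH W' E' m"
    proof -
      have "\<forall>x y. E' x y \<longrightarrow> x \<in> W' \<and> y \<in> W' \<and> x \<noteq> y \<and> E' y x"
      proof (intro allI impI)
        fix x y assume e: "E' x y"
        have EW: "\<And>u v. E u v \<Longrightarrow> u \<in> W \<and> v \<in> W \<and> u \<noteq> v \<and> E v u" using wf wfH_E by metis
        show "x \<in> W' \<and> y \<in> W' \<and> x \<noteq> y \<and> E' y x"
          using e EW c0W unfolding E'_def contrE_def W'_def by (elim conjE disjE) auto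
      qed
      moreover have "\<forall>x\<in>W'. m x \<in> W' \<and> m x \<noteq> x \<and> m (m x) = x \<and> E' x (m x)"
      proof
        fix x assume x: "x \<in> W'"
        have "m x \<notin> S"
        proof
          assume "m x \<in> S" then have "m (m x) \<in> S" using B by blast
          then show False using x inv W'_def by auto
        qed
        then show "m x \<in> W' \<and> m x \<noteq> x \<and> m (m x) = x \<and> E' x (m x)"
          using x wfH_m[OF wf, of x] W'_def E'_def by (auto simp: contrE_def)
      qed
      ultimately show ?thesis using fin W'_def by (simp add: wfH_def)
    qed
    have "card S > 0" using B fin by (meson card_gt_0_iff finite_subset)
    moreover have "card W' = card W - card S" using B fin W'_def by (meson card_Diff_subset finite_subset)
    moreover have "card S \<le> card W" using B fin by (simp add: card_mono)
    ultimately have lt: "card W' < card W" by linarith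
    have ne': "W' \<noteq> {}" using c0W B c0_def W'_def by auto
    have nc': "\<not>(\<exists>xs. rcyc W' E' m xs)"
      using lift[OF wf B' segs] less.prems(3) W'_def E'_def c0_def by blast
    obtain x' X' where X': "x' \<in> X'" "m x' \<notin> X'" "X' \<subseteq> W'"
      "\<forall>a\<in>X'. \<forall>b. E' a b \<longrightarrow> b \<in> X' \<or> (a = x' \<and> b = m x')"
      using less.hyps[OF lt wf' ne' nc'] by blast
    define X where "X = X' \<union> (if c0 \<in> X' then S else {})"
    have x'W: "x' \<in> W" "x' \<notin> S" using X' W'_def by auto
    have mx'S: "m x' \<notin> S"
    proof
      assume "m x' \<in> S" then have "m (m x') \<in> S" using B by blast
      then show False using x'W inv by auto
    qed
    have EE': "\<And>a b. a \<notin> S \<Longrightarrow> b \<notin> S \<Longrightarrow> E a b \<Longrightarrow> E' a b" by (simp add: E'_def contrE_def)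
    have x'p0: "m x' = c0 \<Longrightarrow> x' = p0" using inv x'W mc0 by metis
    have "\<forall>a\<in>X. \<forall>b. E a b \<longrightarrow> b \<in> X \<or> (a = x' \<and> b = m x')"
    proof (intro ballI allI impI)
      fix a b assume aX: "a \<in> X" and e: "E a b"
      have aW: "a \<in> W" "b \<in> W" using e wf by (auto simp: wfH_def)
      show "b \<in> X \<or> (a = x' \<and> b = m x')"
      proof (cases "a \<in> S")
        case True
        then have c0X: "c0 \<in> X'" using aX X_def X' W'_def by (auto split: if_splits)
        show ?thesis
        proof (cases "b \<in> S")
          case True then show ?thesis using c0X X_def by simp
        next
          case False
          show ?thesis
          proof (cases "b = c0")
            case True then show ?thesis using c0X X_def by simp
          next
            case bc: False
            have "E' c0 b" using False bc True e B c0_def unfolding E'_def contrE_def by auto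
            then have "b \<in> X' \<or> (c0 = x' \<and> b = m x')" using X'(4) c0X by blast
            moreover have "\<not> (c0 = x' \<and> b = m x')"
            proof
              assume "c0 = x' \<and> b = m x'"
              then have "b = p0" using mc0 by simp
              then show False using nb True e wf by (metis wfH_E)
            qed
            ultimately show ?thesis using X_def by auto
          qed
        qed
      next
        case aS: False
        then have aX': "a \<in> X'" using aX X_def by (auto split: if_splits)
        show ?thesis
        proof (cases "b \<in> S")
          case False
          then have "E' a b" using EE' aS e by blast
          then show ?thesis using X'(4) aX' X_def by blast
        next
          case True
          show ?thesis
          proof (cases "a = c0")
            case True then show ?thesis using aX' \<open>b \<in> S\<close> X_def by simp
          next
            case False
            have "E b a" using e wf wfH_E by metis
            then have "E' a c0" using False aS True B c0_def unfolding E'_def contrE_def by auto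
            then have "c0 \<in> X' \<or> (a = x' \<and> c0 = m x')" using X'(4) aX' by blast
            moreover have "\<not> (a = x' \<and> c0 = m x')"
            proof
              assume "a = x' \<and> c0 = m x'"
              then have "a = p0" using x'p0 by simp
              then show False using nb True e by simp
            qed
            ultimately show ?thesis using True X_def by auto
          qed
        qed
      qed
    qed
    moreover have "x' \<in> X" "m x' \<notin> X" "X \<subseteq> W" using X' X_def mx'S W'_def B by auto
    ultimately show ?thesis by blast
  qed
qed



definition HE :: "'a set \<Rightarrow> ('a \<Rightarrow> 'a \<Rightarrow> bool) \<Rightarrow> ('a \<Rightarrow> 'a \<Rightarrow> bool) \<Rightarrow> 'a \<times> bool \<Rightarrow> 'a \<times> bool \<Rightarrow> bool" where
  "HE V Rd Bl x y \<longleftrightarrow> fst x \<in> V \<and> fst y \<in> V \<and> ((fst x = fst y \<and> snd x \<noteq> snd y) \<or>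
     (snd x = snd y \<and> fst x \<noteq> fst y \<and> (if snd x then Rd (fst x) (fst y) else Bl (fst x) (fst y))))"

definition flip :: "'a \<times> bool \<Rightarrow> 'a \<times> bool" where "flip x = (fst x, \<not> snd x)"

lemma tcg: "two_coloured_graph V Rd Bl \<Longrightarrow> finite V \<and> (\<forall>u v. Rd u v \<longrightarrow> u \<in> V \<and> v \<in> V \<and> u \<noteq> v \<and> Rd v u)
     \<and> (\<forall>u v. Bl u v \<longrightarrow> u \<in> V \<and> v \<in> V \<and> u \<noteq> v \<and> Bl v u) \<and> (\<forall>u v. \<not> (Rd u v \<and> Bl u v))"
  by (simp add: two_coloured_graph_def)

lemma wfH_G:
  assumes "two_coloured_graph V Rd Bl"
  shows "wfH (V \<times> UNIV) (HE V Rd Bl) flip"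
proof -
  have t: "finite V" "\<And>u v. Rd u v \<Longrightarrow> Rd v u" "\<And>u v. Bl u v \<Longrightarrow> Bl v u" using tcg[OF assms] by auto
  have "finite (V \<times> (UNIV :: bool set))" using t by simp
  moreover have "\<forall>x y. HE V Rd Bl x y \<longrightarrow> x \<in> V \<times> UNIV \<and> y \<in> V \<times> UNIV \<and> x \<noteq> y \<and> HE V Rd Bl y x"
    using t unfolding HE_def by (auto simp: prod_eq_iff split: if_splits)
  moreover have "\<forall>x\<in>V \<times> UNIV. flip x \<in> V \<times> UNIV \<and> flip x \<noteq> x \<and> flip (flip x) = x \<and> HE V Rd Bl x (flip x)"
    by (auto simp: flip_def HE_def)
  ultimately show ?thesis by (simp add: wfH_def)
qed

lemma arc_char:
  assumes "arcH (HE V Rd Bl) flip x y"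
  shows "snd y = (\<not> snd x) \<and> (if snd y then Rd (fst x) (fst y) else Bl (fst x) (fst y))"
  using assms unfolding arcH_def HE_def flip_def by (auto simp: prod_eq_iff split: if_splits)

lemma rcyc_alt:
  assumes tc: "two_coloured_graph V Rd Bl" and cy: "rcyc (V \<times> UNIV) (HE V Rd Bl) flip xs"
  shows "set (map fst xs) \<subseteq> V \<and> alternating_cycle Rd Bl (map fst xs)"
proof -
  have t: "\<And>u v. Rd u v \<Longrightarrow> Rd v u" "\<And>u v. Bl u v \<Longrightarrow> Bl v u" "\<And>u v. \<not> (Rd u v \<and> Bl u v)"
    using tcg[OF tc] by auto
  define k where "k = length xs"
  have k2: "2 \<le> k" and sW: "set xs \<subseteq> V \<times> UNIV" and rg: "reg flip xs"
    and sc: "successively (arcH (HE V Rd Bl) flip) xs"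
    and cl: "arcH (HE V Rd Bl) flip (last xs) (hd xs)" using cy by (auto simp: rcyc_def k_def)
  have ne: "xs \<noteq> []" using k2 k_def by auto
  have A: "\<And>i. i < k \<Longrightarrow> snd (xs ! (Suc i mod k)) = (\<not> snd (xs!i)) \<and>
      (if snd (xs ! (Suc i mod k)) then Rd (fst (xs!i)) (fst (xs ! (Suc i mod k)))
       else Bl (fst (xs!i)) (fst (xs ! (Suc i mod k))))"
    using arc_char cyc_nth[OF sc ne cl] k_def by blast
  have RdI: "\<And>i. i < k \<Longrightarrow> Rd (fst (xs!i)) (fst (xs ! (Suc i mod k))) = snd (xs ! (Suc i mod k))"
    using A t(3) by (metis (full_types))
  have BlI: "\<And>i. i < k \<Longrightarrow> Bl (fst (xs!i)) (fst (xs ! (Suc i mod k))) = (\<not> snd (xs ! (Suc i mod k)))"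
    using A t(3) by (metis (full_types))
  have l3: "3 \<le> k"
  proof (rule ccontr)
    assume "\<not> 3 \<le> k"
    then have k2': "k = 2" using k2 by simp
    have a0: "Rd (fst (xs!0)) (fst (xs!1)) = snd (xs!1)" using RdI[of 0] k2' by simp
    have a1: "Bl (fst (xs!1)) (fst (xs!0)) = (\<not> snd (xs!0))" using BlI[of 1] k2' by simp
    have a2: "snd (xs!0) = (\<not> snd (xs!1))" using A[of 1] k2' by simp
    have a3: "Bl (fst (xs!0)) (fst (xs!1)) = (\<not> snd (xs!1))" using BlI[of 0] k2' by simp
    have a4: "Rd (fst (xs!1)) (fst (xs!0)) = snd (xs!0)" using RdI[of 1] k2' by simp
    show False using a0 a1 a2 a3 a4 t by metis
  qed
  have dist: "distinct (map fst xs)"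
  proof -
    have "inj_on fst (set xs)"
    proof (rule inj_onI)
      fix x y assume xy: "x \<in> set xs" "y \<in> set xs" "fst x = fst y"
      show "x = y"
      proof (cases "snd x = snd y")
        case True then show ?thesis using xy by (simp add: prod_eq_iff)
      next
        case False
        then have "y = flip x" using xy by (simp add: flip_def prod_eq_iff)
        then show ?thesis using rg xy by (simp add: reg_def)
      qed
    qed
    then show ?thesis using rg by (simp add: reg_def distinct_map)
  qed
  have "alternating_cycle Rd Bl (map fst xs)"
    unfolding alternating_cycle_def
  proof (intro conjI allI impI)
    show "3 \<le> length (map fst xs)" using l3 k_def by simp
    show "distinct (map fst xs)" using dist .
  next
    fix i assume i: "i < length (map fst xs)"
    then have ik: "i < k" using k_def by simp
    show "Rd (map fst xs ! i) (map fst xs ! ((i + 1) mod length (map fst xs))) \<or>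
          Bl (map fst xs ! i) (map fst xs ! ((i + 1) mod length (map fst xs)))"
    proof -
      have "Suc i mod k < k" using k2 by simp
      then show ?thesis using A[OF ik] ik k_def by (simp split: if_splits)
    qed
  next
    fix i assume i: "i < length (map fst xs)"
    then have ik: "i < k" using k_def by simp
    define j where "j = Suc i mod k"
    have jk: "j < k" using j_def k2 by simp
    have e: "(i + 2) mod k = Suc j mod k" using j_def by (simp add: mod_Suc_eq)
    have f1: "Rd (fst (xs!i)) (fst (xs!j)) = snd (xs!j)" using RdI[OF ik] j_def by simp
    have f2: "Bl (fst (xs!j)) (fst (xs!(Suc j mod k))) = (\<not> snd (xs!(Suc j mod k)))" using BlI[OF jk] .
    have f3: "snd (xs!(Suc j mod k)) = (\<not> snd (xs!j))" using A[OF jk] by simp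
    show "Rd (map fst xs ! i) (map fst xs ! ((i + 1) mod length (map fst xs))) =
          Bl (map fst xs ! ((i + 1) mod length (map fst xs))) (map fst xs ! ((i + 2) mod length (map fst xs)))"
    proof -
      have "Suc j mod k < k" using k2 by simp
      then show ?thesis using f1 f2 f3 ik jk e j_def k_def by simp
    qed
  qed
  moreover have "set (map fst xs) \<subseteq> V" using sW by auto
  ultimately show ?thesis by simp
qed


lemma card_ex: "Suc 0 \<le> card A \<Longrightarrow> \<exists>x. x \<in> A"
  by (metis card.empty ex_in_conv not_less_eq_eq zero_le)

lemma split_lemma:
  assumes tc: "two_coloured_graph V Rd Bl" and na: "\<not>(\<exists>c. set c \<subseteq> V \<and> alternating_cycle Rd Bl c)"
    and ne: "V \<noteq> {}" and nb: "\<forall>v\<in>V. (\<exists>u. Rd v u) \<and> (\<exists>u. Bl v u)"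
  obtains z C1 C2 where "C1 \<subseteq> V" "C2 \<subseteq> V" "C1 \<inter> C2 = {}" "C1 \<noteq> {}" "C2 \<noteq> {}"
     "\<forall>v\<in>C1. \<forall>u. Rd v u \<or> Bl v u \<longrightarrow> u \<in> C1 \<or> u = z"
     "\<forall>v\<in>C2. \<forall>u. Rd v u \<or> Bl v u \<longrightarrow> u \<in> C2 \<or> u = z"
proof -
  have t: "\<And>u v. Rd u v \<Longrightarrow> u \<in> V \<and> v \<in> V \<and> u \<noteq> v \<and> Rd v u"
    "\<And>u v. Bl u v \<Longrightarrow> u \<in> V \<and> v \<in> V \<and> u \<noteq> v \<and> Bl v u" using tcg[OF tc] by auto
  let ?H = "HE V Rd Bl"
  have wf: "wfH (V \<times> UNIV) ?H flip" using wfH_G[OF tc] .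
  have nc: "\<not>(\<exists>xs. rcyc (V \<times> UNIV) ?H flip xs)" using rcyc_alt[OF tc] na by blast
  obtain x X where X: "x \<in> X" "flip x \<notin> X" "X \<subseteq> V \<times> UNIV"
    "\<forall>a\<in>X. \<forall>b. ?H a b \<longrightarrow> b \<in> X \<or> (a = x \<and> b = flip x)"
    using kotzig[OF wf _ nc] ne by blast
  define z where "z = fst x"
  define \<beta> where "\<beta> = snd x"
  have xz: "x = (z, \<beta>)" by (simp add: z_def \<beta>_def)
  have zV: "z \<in> V" using X xz by auto
  have P1: "\<And>v \<gamma>. v \<in> V \<Longrightarrow> v \<noteq> z \<Longrightarrow> (v, \<gamma>) \<in> X \<longleftrightarrow> (v, \<beta>) \<in> X"
  proof -
    fix v \<gamma> assume v: "v \<in> V" "v \<noteq> z"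
    have h: "\<And>b c. (v, b) \<in> X \<Longrightarrow> (v, c) \<in> X"
    proof -
      fix b c assume "(v, b) \<in> X"
      show "(v, c) \<in> X"
      proof (cases "b = c")
        case True then show ?thesis using \<open>(v, b) \<in> X\<close> by simp
      next
        case False
        then have "?H (v, b) (v, c)" using v by (simp add: HE_def)
        then show ?thesis using X(4) \<open>(v, b) \<in> X\<close> v xz by auto
      qed
    qed
    show "(v, \<gamma>) \<in> X \<longleftrightarrow> (v, \<beta>) \<in> X" using h by blast
  qed
  have P2: "\<And>v u. Rd v u \<or> Bl v u \<Longrightarrow> v \<noteq> z \<Longrightarrow> u \<noteq> z \<Longrightarrow> (v, \<beta>) \<in> X \<Longrightarrow> (u, \<beta>) \<in> X"
  proof -
    fix v u assume e: "Rd v u \<or> Bl v u" and vz: "v \<noteq> z" and uz: "u \<noteq> z" and vX: "(v, \<beta>) \<in> X"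
    define \<gamma> where "\<gamma> = Rd v u"
    have vu: "v \<in> V" "u \<in> V" "v \<noteq> u" using e t by blast+
    have "?H (v, \<gamma>) (u, \<gamma>)" using e vu \<gamma>_def by (auto simp: HE_def)
    moreover have "(v, \<gamma>) \<in> X" using P1 vu vz vX by blast
    ultimately have "(u, \<gamma>) \<in> X" using X(4) xz vz by auto
    then show "(u, \<beta>) \<in> X" using P1 vu uz by blast
  qed
  define C1 where "C1 = {v \<in> V. v \<noteq> z \<and> (v, \<beta>) \<in> X}"
  define C2 where "C2 = {v \<in> V. v \<noteq> z \<and> (v, \<beta>) \<notin> X}"
  have c1: "\<forall>v\<in>C1. \<forall>u. Rd v u \<or> Bl v u \<longrightarrow> u \<in> C1 \<or> u = z"
    using P2 t C1_def by blast
  have c2: "\<forall>v\<in>C2. \<forall>u. Rd v u \<or> Bl v u \<longrightarrow> u \<in> C2 \<or> u = z"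
  proof (intro ballI allI impI)
    fix v u assume v: "v \<in> C2" and e: "Rd v u \<or> Bl v u"
    have e': "Rd u v \<or> Bl u v" using e t by blast
    show "u \<in> C2 \<or> u = z"
    proof (cases "u = z")
      case False
      have "(u, \<beta>) \<notin> X" using P2[OF e' False] v C2_def by blast
      then show ?thesis using e t C2_def by blast
    qed simp
  qed
  have ne1: "C1 \<noteq> {}"
  proof -
    obtain w where w: "if \<beta> then Rd z w else Bl z w" using nb zV by (cases \<beta>) auto
    have wV: "w \<in> V" "w \<noteq> z" using w t by (auto split: if_splits)
    have "?H (z, \<beta>) (w, \<beta>)" using w wV zV by (auto simp: HE_def)
    then have "(w, \<beta>) \<in> X" using X xz by (auto simp: flip_def)
    then show ?thesis using wV C1_def by blast
  qed
  have ne2: "C2 \<noteq> {}"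
  proof -
    obtain w where w: "if \<not>\<beta> then Rd z w else Bl z w" using nb zV by (cases \<beta>) auto
    have wV: "w \<in> V" "w \<noteq> z" using w t by (auto split: if_splits)
    have "(w, \<beta>) \<notin> X"
    proof
      assume "(w, \<beta>) \<in> X"
      then have wX: "(w, \<not>\<beta>) \<in> X" using P1 wV by blast
      have "?H (w, \<not>\<beta>) (z, \<not>\<beta>)" using w wV zV t by (auto simp: HE_def split: if_splits)
      then have "(z, \<not>\<beta>) \<in> X" using X(4) wX xz wV by auto
      then show False using X(2) xz by (simp add: flip_def)
    qed
    then show ?thesis using wV C2_def by blast
  qed
  have "C1 \<subseteq> V" "C2 \<subseteq> V" "C1 \<inter> C2 = {}" using C1_def C2_def by auto
  then show ?thesis using that c1 c2 ne1 ne2 by blast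
qed

lemma restrict:
  assumes tc: "two_coloured_graph V Rd Bl" and CV: "C \<subseteq> V"
    and cl: "\<forall>v\<in>C. \<forall>u. Rd v u \<or> Bl v u \<longrightarrow> u \<in> C \<or> u = z"
    and deg: "\<forall>v\<in>V. Suc d \<le> red_deg V Rd v \<and> Suc d \<le> blue_deg V Bl v"
    and na: "\<not>(\<exists>c. set c \<subseteq> V \<and> alternating_cycle Rd Bl c)"
  shows "two_coloured_graph C (\<lambda>u w. Rd u w \<and> u \<in> C \<and> w \<in> C) (\<lambda>u w. Bl u w \<and> u \<in> C \<and> w \<in> C)
     \<and> (\<forall>v\<in>C. d \<le> red_deg C (\<lambda>u w. Rd u w \<and> u \<in> C \<and> w \<in> C) v
            \<and> d \<le> blue_deg C (\<lambda>u w. Bl u w \<and> u \<in> C \<and> w \<in> C) v)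
     \<and> \<not>(\<exists>c. set c \<subseteq> C \<and> alternating_cycle (\<lambda>u w. Rd u w \<and> u \<in> C \<and> w \<in> C) (\<lambda>u w. Bl u w \<and> u \<in> C \<and> w \<in> C) c)"
proof -
  have t: "finite V" "\<And>u v. Rd u v \<Longrightarrow> u \<in> V \<and> v \<in> V \<and> u \<noteq> v \<and> Rd v u"
    "\<And>u v. Bl u v \<Longrightarrow> u \<in> V \<and> v \<in> V \<and> u \<noteq> v \<and> Bl v u" "\<And>u v. \<not> (Rd u v \<and> Bl u v)"
    using tcg[OF tc] by auto
  have fC: "finite C" using t(1) CV finite_subset by blast
  let ?R = "\<lambda>u w. Rd u w \<and> u \<in> C \<and> w \<in> C"
  let ?B = "\<lambda>u w. Bl u w \<and> u \<in> C \<and> w \<in> C"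
  have tc': "two_coloured_graph C ?R ?B" using t fC by (auto simp: two_coloured_graph_def)
  have dg: "\<forall>v\<in>C. d \<le> red_deg C ?R v \<and> d \<le> blue_deg C ?B v"
  proof
    fix v assume v: "v \<in> C"
    have "{u \<in> V. Rd v u} \<subseteq> insert z {u \<in> C. ?R v u}" using cl v t by blast
    then have "card {u \<in> V. Rd v u} \<le> card (insert z {u \<in> C. ?R v u})" using fC by (simp add: card_mono)
    also have "\<dots> \<le> Suc (card {u \<in> C. ?R v u})" using fC by (simp add: card_insert_if)
    moreover have "Suc d \<le> card {u \<in> V. Rd v u}" using deg v CV by (auto simp: red_deg_def)
    ultimately have r: "d \<le> red_deg C ?R v" by (simp add: red_deg_def)
    have "{u \<in> V. Bl v u} \<subseteq> insert z {u \<in> C. ?B v u}" using cl v t by blast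
    then have "card {u \<in> V. Bl v u} \<le> card (insert z {u \<in> C. ?B v u})" using fC by (simp add: card_mono)
    also have "\<dots> \<le> Suc (card {u \<in> C. ?B v u})" using fC by (simp add: card_insert_if)
    moreover have "Suc d \<le> card {u \<in> V. Bl v u}" using deg v CV by (auto simp: blue_deg_def)
    ultimately have b: "d \<le> blue_deg C ?B v" by (simp add: blue_deg_def)
    show "d \<le> red_deg C ?R v \<and> d \<le> blue_deg C ?B v" using r b by simp
  qed
  have nc: "\<not>(\<exists>c. set c \<subseteq> C \<and> alternating_cycle ?R ?B c)"
  proof
    assume "\<exists>c. set c \<subseteq> C \<and> alternating_cycle ?R ?B c"
    then obtain c where c: "set c \<subseteq> C" "alternating_cycle ?R ?B c" by blast
    have len: "length c > 0" using c(2) by (auto simp: alternating_cycle_def)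
    have inC: "\<And>i. c ! (i mod length c) \<in> C" using c(1) len by (simp add: subsetD)
    have inC0: "\<And>i. i < length c \<Longrightarrow> c ! i \<in> C" using c(1) by (simp add: subsetD)
    have ac: "3 \<le> length c" "distinct c"
      "\<forall>i < length c. ?R (c!i) (c!((i+1) mod length c)) \<or> ?B (c!i) (c!((i+1) mod length c))"
      "\<forall>i < length c. ?R (c!i) (c!((i+1) mod length c)) \<longleftrightarrow>
          ?B (c!((i+1) mod length c)) (c!((i+2) mod length c))"
      using c(2) unfolding alternating_cycle_def by blast+
    have "alternating_cycle Rd Bl c"
      unfolding alternating_cycle_def
    proof (intro conjI allI impI)
      show "3 \<le> length c" "distinct c" using ac by auto
    next
      fix i assume i: "i < length c"
      show "Rd (c!i) (c!((i+1) mod length c)) \<or> Bl (c!i) (c!((i+1) mod length c))"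
        using ac(3) i by blast
    next
      fix i assume i: "i < length c"
      have a: "c!i \<in> C" "c!((i+1) mod length c) \<in> C" "c!((i+2) mod length c) \<in> C"
        using inC0 i len by auto
      show "Rd (c!i) (c!((i+1) mod length c)) \<longleftrightarrow> Bl (c!((i+1) mod length c)) (c!((i+2) mod length c))"
        using ac(4) i a by blast
    qed
    then show False using na c(1) CV by blast
  qed
  show ?thesis using tc' dg nc by blast
qed

lemma quant:
  "1 \<le> d \<Longrightarrow> two_coloured_graph V Rd Bl \<Longrightarrow> V \<noteq> {} \<Longrightarrow>
   \<forall>v\<in>V. d \<le> red_deg V Rd v \<and> d \<le> blue_deg V Bl v \<Longrightarrow>
   \<not>(\<exists>c. set c \<subseteq> V \<and> alternating_cycle Rd Bl c) \<Longrightarrow> 2 ^ d + 1 \<le> card V"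
proof (induction d arbitrary: V Rd Bl rule: nat_induct_at_least)
  case base
  have t: "finite V" "\<And>u v. Rd u v \<Longrightarrow> u \<in> V \<and> v \<in> V \<and> u \<noteq> v \<and> Rd v u"
    "\<And>u v. Bl u v \<Longrightarrow> u \<in> V \<and> v \<in> V \<and> u \<noteq> v \<and> Bl v u" "\<And>u v. \<not> (Rd u v \<and> Bl u v)"
    using tcg[OF base.prems(1)] by auto
  obtain v where v: "v \<in> V" using base.prems by blast
  have "Suc 0 \<le> card {u \<in> V. Rd v u}" using base.prems(3) v by (auto simp: red_deg_def)
  then obtain a where a: "Rd v a" using card_ex by blast
  have "Suc 0 \<le> card {u \<in> V. Bl v u}" using base.prems(3) v by (auto simp: blue_deg_def)
  then obtain b where b: "Bl v b" using card_ex by blast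
  have "a \<noteq> b" using a b t(4) by blast
  moreover have "a \<in> V" "a \<noteq> v" using t(2)[OF a] by auto
  moreover have "b \<in> V" "b \<noteq> v" using t(3)[OF b] by auto
  ultimately have "card {v, a, b} = 3" "{v, a, b} \<subseteq> V" using v by auto
  moreover have "card {v, a, b} \<le> card V" using calculation(2) t(1) by (rule card_mono[rotated])
  ultimately show ?case by simp
next
  case (Suc d)
  have t: "finite V" "\<And>u v. Rd u v \<Longrightarrow> u \<in> V \<and> v \<in> V \<and> u \<noteq> v \<and> Rd v u"
    "\<And>u v. Bl u v \<Longrightarrow> u \<in> V \<and> v \<in> V \<and> u \<noteq> v \<and> Bl v u" "\<And>u v. \<not> (Rd u v \<and> Bl u v)"
    using tcg[OF Suc.prems(1)] by auto
  have nb: "\<forall>v\<in>V. (\<exists>u. Rd v u) \<and> (\<exists>u. Bl v u)"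
  proof
    fix v assume v: "v \<in> V"
    have "Suc 0 \<le> card {u \<in> V. Rd v u}" using Suc.prems(3) Suc.hyps v by (auto simp: red_deg_def)
    moreover have "Suc 0 \<le> card {u \<in> V. Bl v u}" using Suc.prems(3) Suc.hyps v by (auto simp: blue_deg_def)
    ultimately show "(\<exists>u. Rd v u) \<and> (\<exists>u. Bl v u)" using card_ex by blast
  qed
  obtain z C1 C2 where C: "C1 \<subseteq> V" "C2 \<subseteq> V" "C1 \<inter> C2 = {}" "C1 \<noteq> {}" "C2 \<noteq> {}"
     "\<forall>v\<in>C1. \<forall>u. Rd v u \<or> Bl v u \<longrightarrow> u \<in> C1 \<or> u = z"
     "\<forall>v\<in>C2. \<forall>u. Rd v u \<or> Bl v u \<longrightarrow> u \<in> C2 \<or> u = z"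
    by (rule split_lemma[OF Suc.prems(1) Suc.prems(4) Suc.prems(2) nb])
  note R1 = restrict[OF Suc.prems(1) C(1) C(6) Suc.prems(3) Suc.prems(4)]
  have k1: "2 ^ d + 1 \<le> card C1"
    by (rule Suc.IH[OF conjunct1[OF R1] C(4) conjunct1[OF conjunct2[OF R1]] conjunct2[OF conjunct2[OF R1]]])
  note R2 = restrict[OF Suc.prems(1) C(2) C(7) Suc.prems(3) Suc.prems(4)]
  have k2: "2 ^ d + 1 \<le> card C2"
    by (rule Suc.IH[OF conjunct1[OF R2] C(5) conjunct1[OF conjunct2[OF R2]] conjunct2[OF conjunct2[OF R2]]])
  have f1: "finite C1" using C(1) t(1) by (rule finite_subset)
  have f2: "finite C2" using C(2) t(1) by (rule finite_subset)
  have "card (C1 \<union> C2) = card C1 + card C2" by (rule card_Un_disjoint[OF f1 f2 C(3)])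
  moreover have "card (C1 \<union> C2) \<le> card V" using C(1,2) t(1) by (intro card_mono) auto
  ultimately show ?case using k1 k2 by simp
qed

theorem corollary2p2:
  fixes V :: "'a set" and Rd Bl :: "'a \<Rightarrow> 'a \<Rightarrow> bool"
  assumes "two_coloured_graph V Rd Bl"
    and "card V \<ge> 2"
    and "\<forall>v\<in>V. real (red_deg V Rd v) \<ge> log 2 (real (card V))"
    and "\<forall>v\<in>V. real (blue_deg V Bl v) \<ge> log 2 (real (card V))"
  shows "\<exists>c. set c \<subseteq> V \<and> alternating_cycle Rd Bl c"
proof (rule ccontr)
  assume na: "\<not> (\<exists>c. set c \<subseteq> V \<and> alternating_cycle Rd Bl c)"
  define n where "n = card V"
  define L where "L = log 2 (real n)"
  define d where "d = nat \<lceil>L\<rceil>"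
  have n2: "2 \<le> n" using assms(2) n_def by simp
  have Lpos: "1 \<le> L" using n2 L_def by simp
  have d1: "1 \<le> d" using Lpos d_def by linarith
  have Ld: "L \<le> real d" using Lpos d_def by linarith
  have ne: "V \<noteq> {}" using n2 n_def by auto
  have deg: "\<forall>v\<in>V. d \<le> red_deg V Rd v \<and> d \<le> blue_deg V Bl v"
  proof
    fix v assume v: "v \<in> V"
    have "L \<le> real (red_deg V Rd v)" "L \<le> real (blue_deg V Bl v)" using assms(3,4) v L_def n_def by auto
    then show "d \<le> red_deg V Rd v \<and> d \<le> blue_deg V Bl v" using d_def by linarith
  qed
  have "2 ^ d + 1 \<le> n" using quant[OF d1 assms(1) ne deg na] n_def by simp
  moreover have "real n \<le> 2 ^ d"
  proof -
    have "real n = 2 powr L" using n2 L_def by simp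
    also have "\<dots> \<le> 2 powr (real d)" using Ld by (intro powr_mono) auto
    also have "\<dots> = 2 ^ d" by (simp add: powr_realpow)
    finally show ?thesis .
  qed
  ultimately show False by (metis of_nat_le_iff of_nat_numeral of_nat_power not_less_eq_eq Suc_eq_plus1 le_SucI)
qed


end
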